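(* Fix widths $\mathbf{n}=(n_0,\dots,n_L)$, piecewise differentiable $h_1,\dots,h_L:\mathbb{R}\to\mathbb{R}$, a finite batch $\{(x_j,y_j)\}\subseteq\mathbb{R}^{n_0}\times\mathbb{R}^{n_L}$ and a cost function $\mathcal C$, and let $\mathcal L,\mathcal L_{\rm red},\iota_1,q_1,\iota_2,q_2,\iota$ be as in the context. Then: (1) $\iota=\iota_1\circ\iota_2$ and $\mathcal L\circ\iota=\mathcal L_{\rm red}$; (2) $\mathcal L\circ\iota_1=\mathcal L_{\rm red}\circ q_2$ on $\mathsf{Param}^{\rm int}(\mathbf{n})$; (3) for every $\mathbf{T}\in\mathsf{Param}^{\rm int}(\mathbf{n})$, $q_1\big(\nabla_{\iota_1(\mathbf{T})}\mathcal L\big)=\iota_2\big(\nabla_{q_2(\mathbf{T})}\mathcal L_{\rm red}\big)$.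
   Context: Merged notation: $\mathsf{Param}(\mathbf{n})=\prod_{i=1}^L\mathbb{R}^{n_i\times(n_{i-1}+1)}$, $\mathbf{A}=(A_i)$. Reduced widths: $n^{\rm red}_0=n_0$, $n^{\rm red}_i=\min(n_i,n^{\rm red}_{i-1}+1)$ for $1\le i\le L-1$, $n^{\rm red}_L=n_L$. For $h:\mathbb{R}\to\mathbb{R}$, $h^{(k)}(v)=h(|v|)v/|v|$ ($v\ne0$), $h^{(k)}(0)=0$. With $\rho_i=h_i^{(n_i)}$, the feedforward function of $\mathbf{A}$ is $F=F_L$, $F_0=\mathrm{id}$, $F_i(x)=\rho_i\big(A_i\,(1,F_{i-1}(x))\big)$, where $(1,v)\in\mathbb{R}^{1+n_{i-1}}$ prepends a 1. $\mathcal L(\mathbf{A})=\sum_j\mathcal C(F(x_j),y_j)$; $\mathcal L_{\rm red}$ on $\mathsf{Param}(\mathbf{n}^{\rm red})$ is defined the same way using $\rho^{\rm red}_i=h_i^{(n^{\rm red}_i)}$. The losses are assumed differentiable so gradients exist. $\mathsf{Param}^{\rm int}(\mathbf{n})$ is the subspace of $\mathbf{T}=(T_i)$ with the bottom-left $(n_i-n^{\rm red}_i)\times(1+n^{\rm red}_{i-1})$ block of each $T_i$ zero. $\iota_1:\mathsf{Param}^{\rm int}(\mathbf{n})\hookrightarrow\mathsf{Param}(\mathbf{n})$ is the inclusion; $q_1:\mathsf{Param}(\mathbf{n})\to\mathsf{Param}^{\rm int}(\mathbf{n})$ zeroes out that block in each $A_i$. $\iota_2:\mathsf{Param}(\mathbf{n}^{\rm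 red})\to\mathsf{Param}^{\rm int}(\mathbf{n})$ pads each $B_i$ with $n_i-n^{\rm red}_i$ zero rows at the bottom and $n_{i-1}-n^{\rm red}_{i-1}$ zero columns at the right, i.e. $B_i\mapsto\begin{bmatrix}B_i&0\\0&0\end{bmatrix}$; $q_2:\mathsf{Param}^{\rm int}(\mathbf{n})\to\mathsf{Param}(\mathbf{n}^{\rm red})$ extracts the top-left $n^{\rm red}_i\times(1+n^{\rm red}_{i-1})$ block of each $T_i$. $\iota:\mathsf{Param}(\mathbf{n}^{\rm red})\hookrightarrow\mathsf{Param}(\mathbf{n})$ places each $B_i$ in the top-left corner of an $n_i\times(1+n_{i-1})$ zero matrix. *)

theory Defs
  imports "HOL-Analysis.Analysis"
begin

text \<open>A parameter A is a function A i r c (layer i in 1..L, row r < n i, column c < n (i-1) + 1),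
column 0 being the bias column; entries outside these ranges are zero.
Vectors of R^k are functions nat \<Rightarrow> real, components r < k.\<close>

type_synonym params = "nat \<Rightarrow> nat \<Rightarrow> nat \<Rightarrow> real"
type_synonym vec = "nat \<Rightarrow> real"

definition Param :: "(nat \<Rightarrow> nat) \<Rightarrow> nat \<Rightarrow> params set" where
  "Param n L = {A. \<forall>i r c. A i r c \<noteq> 0 \<longrightarrow> 1 \<le> i \<and> i \<le> L \<and> r < n i \<and> c < n (i - 1) + 1}"

fun nred :: "(nat \<Rightarrow> nat) \<Rightarrow> nat \<Rightarrow> nat \<Rightarrow> nat" where
  "nred n L 0 = n 0"
| "nred n L (Suc i) = (if Suc i < L then min (n (Suc i)) (nred n L i + 1) else n (Suc i))"

definition vnorm :: "nat \<Rightarrow> vec \<Rightarrow> real" where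
  "vnorm k v = sqrt (\<Sum>r<k. (v r)\<^sup>2)"

definition radial :: "(real \<Rightarrow> real) \<Rightarrow> nat \<Rightarrow> vec \<Rightarrow> vec" where
  "radial h k v = (\<lambda>r. if r < k \<and> vnorm k v \<noteq> 0 then h (vnorm k v) * v r / vnorm k v else 0)"

definition aff :: "(nat \<Rightarrow> nat) \<Rightarrow> params \<Rightarrow> nat \<Rightarrow> vec \<Rightarrow> vec" where
  "aff n A i v = (\<lambda>r. if r < n i then A i r 0 + (\<Sum>c<n (i - 1). A i r (Suc c) * v c) else 0)"

fun ff :: "(nat \<Rightarrow> nat) \<Rightarrow> (nat \<Rightarrow> real \<Rightarrow> real) \<Rightarrow> params \<Rightarrow> vec \<Rightarrow> nat \<Rightarrow> vec" where
  "ff n h A x 0 = (\<lambda>r. if r < n 0 then x r else 0)"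
| "ff n h A x (Suc i) = radial (h (Suc i)) (n (Suc i)) (aff n A (Suc i) (ff n h A x i))"

definition loss :: "(nat \<Rightarrow> nat) \<Rightarrow> nat \<Rightarrow> (nat \<Rightarrow> real \<Rightarrow> real) \<Rightarrow> (vec \<Rightarrow> vec \<Rightarrow> real)
    \<Rightarrow> (vec \<times> vec) list \<Rightarrow> params \<Rightarrow> real" where
  "loss n L h C data A = (\<Sum>(x, y) \<leftarrow> data. C (ff n h A x L) y)"

definition loss_red :: "(nat \<Rightarrow> nat) \<Rightarrow> nat \<Rightarrow> (nat \<Rightarrow> real \<Rightarrow> real) \<Rightarrow> (vec \<Rightarrow> vec \<Rightarrow> real)
    \<Rightarrow> (vec \<times> vec) list \<Rightarrow> params \<Rightarrow> real" where
  "loss_red n L h C data B = loss (nred n L) L h C data B"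

definition in_block :: "(nat \<Rightarrow> nat) \<Rightarrow> nat \<Rightarrow> nat \<Rightarrow> nat \<Rightarrow> nat \<Rightarrow> bool" where
  "in_block n L i r c \<longleftrightarrow> nred n L i \<le> r \<and> c < 1 + nred n L (i - 1)"

definition Param_int :: "(nat \<Rightarrow> nat) \<Rightarrow> nat \<Rightarrow> params set" where
  "Param_int n L = {T \<in> Param n L. \<forall>i r c. in_block n L i r c \<longrightarrow> T i r c = 0}"

definition iota1 :: "params \<Rightarrow> params" where
  "iota1 T = T"

definition q1 :: "(nat \<Rightarrow> nat) \<Rightarrow> nat \<Rightarrow> params \<Rightarrow> params" where
  "q1 n L A = (\<lambda>i r c. if in_block n L i r c then 0 else A i r c)"

definition top_left :: "(nat \<Rightarrow> nat) \<Rightarrow> nat \<Rightarrow> nat \<Rightarrow> nat \<Rightarrow> nat \<Rightarrow> bool" where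
  "top_left n L i r c \<longleftrightarrow> r < nred n L i \<and> c < 1 + nred n L (i - 1)"

definition iota2 :: "(nat \<Rightarrow> nat) \<Rightarrow> nat \<Rightarrow> params \<Rightarrow> params" where
  "iota2 n L B = (\<lambda>i r c. if top_left n L i r c then B i r c else 0)"

definition q2 :: "(nat \<Rightarrow> nat) \<Rightarrow> nat \<Rightarrow> params \<Rightarrow> params" where
  "q2 n L T = (\<lambda>i r c. if top_left n L i r c then T i r c else 0)"

definition iota :: "(nat \<Rightarrow> nat) \<Rightarrow> nat \<Rightarrow> params \<Rightarrow> params" where
  "iota n L B = (\<lambda>i r c. if top_left n L i r c then B i r c else 0)"

definition pinner :: "(nat \<Rightarrow> nat) \<Rightarrow> nat \<Rightarrow> params \<Rightarrow> params \<Rightarrow> real" where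
  "pinner n L G D = (\<Sum>i\<in>{1..L}. \<Sum>r<n i. \<Sum>c<n (i - 1) + 1. G i r c * D i r c)"

definition pnorm :: "(nat \<Rightarrow> nat) \<Rightarrow> nat \<Rightarrow> params \<Rightarrow> real" where
  "pnorm n L D = sqrt (pinner n L D D)"

definition has_pgrad :: "(nat \<Rightarrow> nat) \<Rightarrow> nat \<Rightarrow> (params \<Rightarrow> real) \<Rightarrow> params \<Rightarrow> params \<Rightarrow> bool" where
  "has_pgrad n L f A G \<longleftrightarrow> G \<in> Param n L \<and>
     (\<forall>e>0. \<exists>d>0. \<forall>D\<in>Param n L. pnorm n L D < d \<longrightarrow>
        \<bar>f (\<lambda>i r c. A i r c + D i r c) - f A - pinner n L G D\<bar> \<le> e * pnorm n L D)"

definition pdifferentiable :: "(nat \<Rightarrow> nat) \<Rightarrow> nat \<Rightarrow> (params \<Rightarrow> real) \<Rightarrow> params \<Rightarrow> bool" where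
  "pdifferentiable n L f A \<longleftrightarrow> (\<exists>G. has_pgrad n L f A G)"

definition pgrad :: "(nat \<Rightarrow> nat) \<Rightarrow> nat \<Rightarrow> (params \<Rightarrow> real) \<Rightarrow> params \<Rightarrow> params" where
  "pgrad n L f A = (THE G. has_pgrad n L f A G)"

definition piecewise_diff :: "(real \<Rightarrow> real) \<Rightarrow> bool" where
  "piecewise_diff h \<longleftrightarrow> continuous_on UNIV h \<and> (\<exists>S. finite S \<and> (\<forall>x. x \<notin> S \<longrightarrow> h differentiable (at x)))"

end

theory Submission imports Defs begin

lemma nred_le: "nred n L i \<le> n i"
  by (cases i) auto

lemma nred_0: "nred n L 0 = n 0" by simp

lemma ff_zero: "m i \<le> r \<Longrightarrow> ff m h B x i r = 0"
  by (cases i) (auto simp: radial_def)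

lemma vnorm_ext: assumes "k \<le> k'" "\<And>r. k \<le> r \<Longrightarrow> w r = 0"
  shows "vnorm k' w = vnorm k w"
proof -
  have "(\<Sum>r<k'. (w r)\<^sup>2) = (\<Sum>r<k. (w r)\<^sup>2)"
    by (rule sum.mono_neutral_right) (use assms in auto)
  then show ?thesis by (simp add: vnorm_def)
qed

lemma radial_ext: assumes "k \<le> k'" "\<And>r. k \<le> r \<Longrightarrow> w r = 0"
  shows "radial g k' w = radial g k w"
  using vnorm_ext[OF assms] assms unfolding radial_def
  by (auto intro!: ext)

lemma ff_restr:
  assumes m0: "m 0 = n 0" and mle: "\<And>i. i \<le> L \<Longrightarrow> m i \<le> n i"
  and H: "\<And>i r c. 1 \<le> i \<Longrightarrow> i \<le> L \<Longrightarrow> m i \<le> r \<Longrightarrow> c < 1 + m (i-1) \<Longrightarrow> A i r c = 0"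
  shows "i \<le> L \<Longrightarrow> ff n h A x i = ff m h (\<lambda>i r c. if r < m i \<and> c < 1 + m (i-1) then A i r c else 0) x i"
proof (induction i)
  case 0
  then show ?case using m0 by simp
next
  case (Suc i)
  define B where "B = (\<lambda>i r c. if r < m i \<and> c < 1 + m (i-1) then A i r c else 0)"
  define v where "v = ff m h B x i"
  have IH: "ff n h A x i = v" using Suc unfolding v_def B_def by simp
  have vz: "\<And>c. m i \<le> c \<Longrightarrow> v c = 0" unfolding v_def by (rule ff_zero)
  have mi: "m i \<le> n i" using mle Suc by simp
  have mS: "m (Suc i) \<le> n (Suc i)" using mle Suc by simp
  have sumeq: "(\<Sum>c<n i. A (Suc i) r (Suc c) * v c) = (\<Sum>c<m i. A (Suc i) r (Suc c) * v c)" for r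
    by (rule sum.mono_neutral_right) (use vz mi in auto)
  have affeq: "aff n A (Suc i) v = aff m B (Suc i) v"
  proof
    fix r
    show "aff n A (Suc i) v r = aff m B (Suc i) v r"
    proof (cases "r < m (Suc i)")
      case True
      then show ?thesis using mS unfolding aff_def B_def by (auto simp: sumeq)
    next
      case False
      have "A (Suc i) r 0 = 0" using H[of "Suc i" r 0] False Suc.prems by simp
      moreover have "(\<Sum>c<m i. A (Suc i) r (Suc c) * v c) = 0"
        using H[of "Suc i" r] False Suc.prems by (auto intro!: sum.neutral)
      ultimately show ?thesis using False unfolding aff_def B_def by (simp add: sumeq)
    qed
  qed
  have wz: "\<And>r. m (Suc i) \<le> r \<Longrightarrow> aff m B (Suc i) v r = 0" by (simp add: aff_def)
  show ?case
    using IH affeq radial_ext[OF mS wz, where g="h (Suc i)"]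
    by (simp add: v_def B_def)
qed

definition delta :: "nat \<Rightarrow> nat \<Rightarrow> nat \<Rightarrow> real \<Rightarrow> params" where
  "delta i r c t = (\<lambda>i' r' c'. if i' = i \<and> r' = r \<and> c' = c then t else 0)"

definition valid :: "(nat \<Rightarrow> nat) \<Rightarrow> nat \<Rightarrow> nat \<Rightarrow> nat \<Rightarrow> nat \<Rightarrow> bool" where
  "valid n L i r c \<longleftrightarrow> 1 \<le> i \<and> i \<le> L \<and> r < n i \<and> c < n (i - 1) + 1"

lemma Param_valid: "A \<in> Param n L \<Longrightarrow> A i r c \<noteq> 0 \<Longrightarrow> valid n L i r c"
  by (auto simp: Param_def valid_def)

lemma sum_single:
  assumes "finite T" "a \<in> T" "\<And>x. x \<in> T \<Longrightarrow> x \<noteq> a \<Longrightarrow> g x = 0"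
  shows "sum g T = (g a :: real)"
proof -
  have "sum g T = sum g {a}"
    by (rule sum.mono_neutral_right) (use assms in auto)
  then show ?thesis by simp
qed

lemma pinner_delta:
  assumes "valid n L i r c"
  shows "pinner n L G (delta i r c t) = G i r c * t"
proof -
  have v: "i \<in> {1..L}" "r \<in> {..<n i}" "c \<in> {..<n (i - 1) + 1}" using assms by (auto simp: valid_def)
  have "pinner n L G (delta i r c t) =
     (\<Sum>r'<n i. \<Sum>c'<n (i - 1) + 1. G i r' c' * delta i r c t i r' c')"
    unfolding pinner_def by (rule sum_single[OF _ v(1)]) (auto simp: delta_def)
  also have "\<dots> = (\<Sum>c'<n (i - 1) + 1. G i r c' * delta i r c t i r c')"
    by (rule sum_single[OF _ v(2)]) (auto simp: delta_def)
  also have "\<dots> = G i r c * delta i r c t i r c"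
    by (rule sum_single[OF _ v(3)]) (auto simp: delta_def)
  finally show ?thesis by (simp add: delta_def)
qed

lemma delta_Param: "valid n L i r c \<Longrightarrow> delta i r c t \<in> Param n L"
  unfolding Param_def delta_def valid_def by auto

lemma pnorm_delta: "valid n L i r c \<Longrightarrow> pnorm n L (delta i r c t) = \<bar>t\<bar>"
  unfolding pnorm_def using pinner_delta[of n L i r c "delta i r c t" t]
  by (simp add: delta_def)

lemma coord:
  assumes "has_pgrad n L f A G" "valid n L i r c"
  shows "\<forall>e>0. \<exists>d>0. \<forall>t. \<bar>t\<bar> < d \<longrightarrow>
     \<bar>f (\<lambda>i' r' c'. A i' r' c' + delta i r c t i' r' c') - f A - G i r c * t\<bar> \<le> e * \<bar>t\<bar>"
proof (intro allI impI)
  fix e :: real assume "e > 0"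
  then obtain d where d: "d > 0" "\<forall>D\<in>Param n L. pnorm n L D < d \<longrightarrow>
        \<bar>f (\<lambda>i r c. A i r c + D i r c) - f A - pinner n L G D\<bar> \<le> e * pnorm n L D"
    using assms(1) unfolding has_pgrad_def by blast
  show "\<exists>d>0. \<forall>t. \<bar>t\<bar> < d \<longrightarrow>
     \<bar>f (\<lambda>i' r' c'. A i' r' c' + delta i r c t i' r' c') - f A - G i r c * t\<bar> \<le> e * \<bar>t\<bar>"
  proof (intro exI conjI allI impI)
    fix t :: real assume "\<bar>t\<bar> < d"
    then show "\<bar>f (\<lambda>i' r' c'. A i' r' c' + delta i r c t i' r' c') - f A - G i r c * t\<bar> \<le> e * \<bar>t\<bar>"
      using d(2)[rule_format, OF delta_Param[OF assms(2)], of t]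
      by (simp add: pnorm_delta[OF assms(2)] pinner_delta[OF assms(2)])
  qed (rule d(1))
qed

lemma deriv_unique:
  fixes phi :: "real \<Rightarrow> real"
  assumes "\<forall>e>0. \<exists>d>0. \<forall>t. \<bar>t\<bar> < d \<longrightarrow> \<bar>phi t - p0 - a * t\<bar> \<le> e * \<bar>t\<bar>"
      and "\<forall>e>0. \<exists>d>0. \<forall>t. \<bar>t\<bar> < d \<longrightarrow> \<bar>phi t - p0 - b * t\<bar> \<le> e * \<bar>t\<bar>"
  shows "a = b"
proof (rule ccontr)
  assume ne: "a \<noteq> b"
  define e where "e = \<bar>a - b\<bar> / 3"
  have e: "e > 0" using ne by (simp add: e_def)
  obtain d1 where d1: "d1 > 0" "\<forall>t. \<bar>t\<bar> < d1 \<longrightarrow> \<bar>phi t - p0 - a * t\<bar> \<le> e * \<bar>t\<bar>"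
    using assms(1) e by blast
  obtain d2 where d2: "d2 > 0" "\<forall>t. \<bar>t\<bar> < d2 \<longrightarrow> \<bar>phi t - p0 - b * t\<bar> \<le> e * \<bar>t\<bar>"
    using assms(2) e by blast
  define t where "t = min d1 d2 / 2"
  have t: "t > 0" "\<bar>t\<bar> < d1" "\<bar>t\<bar> < d2" using d1 d2 by (auto simp: t_def)
  have "(a - b) * t = (phi t - p0 - b * t) - (phi t - p0 - a * t)" by (simp add: algebra_simps)
  then have "\<bar>(a - b) * t\<bar> \<le> \<bar>phi t - p0 - b * t\<bar> + \<bar>phi t - p0 - a * t\<bar>"
    by (metis abs_triangle_ineq4)
  also have "\<dots> \<le> 2 * e * \<bar>t\<bar>"
  proof -
    have "\<bar>phi t - p0 - a * t\<bar> \<le> e * \<bar>t\<bar>" using d1(2) t(2) by blast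
    moreover have "\<bar>phi t - p0 - b * t\<bar> \<le> e * \<bar>t\<bar>" using d2(2) t(3) by blast
    ultimately show ?thesis by linarith
  qed
  finally have 1: "\<bar>a - b\<bar> * t \<le> 2 * (e * t)" using t by (simp add: abs_mult)
  have "e * t > 0" using e t by simp
  moreover have "\<bar>a - b\<bar> * t = 3 * (e * t)" by (simp add: e_def)
  ultimately show False using 1 by linarith
qed

lemma has_pgrad_unique:
  assumes "has_pgrad n L f A G1" "has_pgrad n L f A G2"
  shows "G1 = G2"
proof (intro ext)
  fix i r c
  show "G1 i r c = G2 i r c"
  proof (cases "valid n L i r c")
    case True
    show ?thesis by (rule deriv_unique[OF coord[OF assms(1) True] coord[OF assms(2) True]])
  next
    case False
    have "G1 \<in> Param n L" "G2 \<in> Param n L" using assms unfolding has_pgrad_def by auto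
    then have "G1 i r c = 0" "G2 i r c = 0"
      using False Param_valid by blast+
    then show ?thesis by simp
  qed
qed

lemma pgrad_eq: "has_pgrad n L f A G \<Longrightarrow> pgrad n L f A = G"
  unfolding pgrad_def using has_pgrad_unique by blast

lemma const_deriv: "\<forall>e>0. \<exists>d>0. \<forall>t. \<bar>t\<bar> < d \<longrightarrow> \<bar>(p0::real) - p0 - 0 * t\<bar> \<le> e * \<bar>t\<bar>"
  by (auto intro: exI[of _ 1])

theorem lemma6:
  fixes n :: "nat \<Rightarrow> nat" and L :: nat and h :: "nat \<Rightarrow> real \<Rightarrow> real"
    and C :: "vec \<Rightarrow> vec \<Rightarrow> real" and data :: "(vec \<times> vec) list"
  assumes "\<forall>i\<in>{1..L}. piecewise_diff (h i)"
    and "\<forall>A\<in>Param n L. pdifferentiable n L (loss n L h C data) A"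
    and "\<forall>B\<in>Param (nred n L) L. pdifferentiable (nred n L) L (loss_red n L h C data) B"
  shows "(\<forall>B\<in>Param (nred n L) L. iota n L B = iota1 (iota2 n L B)
            \<and> loss n L h C data (iota n L B) = loss_red n L h C data B)
       \<and> (\<forall>T\<in>Param_int n L. loss n L h C data (iota1 T) = loss_red n L h C data (q2 n L T))
       \<and> (\<forall>T\<in>Param_int n L.
            q1 n L (pgrad n L (loss n L h C data) (iota1 T))
            = iota2 n L (pgrad (nred n L) L (loss_red n L h C data) (q2 n L T)))"
proof -
  define m where "m = nred n L"
  have m0: "m 0 = n 0" by (simp add: m_def)
  have mle: "\<And>i. m i \<le> n i" by (simp add: m_def nred_le)
  have lossR: "loss n L h C data A = loss m L h C data (\<lambda>i r c. if r < m i \<and> c < 1 + m (i-1) then A i r c else 0)"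
    if H: "\<And>i r c. 1 \<le> i \<Longrightarrow> i \<le> L \<Longrightarrow> m i \<le> r \<Longrightarrow> c < 1 + m (i-1) \<Longrightarrow> A i r c = 0" for A
    unfolding loss_def using ff_restr[where m=m and n=n and L=L and A=A and h=h and i=L, OF m0 mle H] by simp
  have P1: "iota n L B = iota1 (iota2 n L B) \<and> loss n L h C data (iota n L B) = loss_red n L h C data B"
    if B: "B \<in> Param (nred n L) L" for B
  proof
    show "iota n L B = iota1 (iota2 n L B)" by (simp add: iota_def iota1_def iota2_def)
    have "(\<lambda>i r c. if r < m i \<and> c < 1 + m (i-1) then iota n L B i r c else 0) = B"
      using B unfolding Param_def iota_def top_left_def m_def by (force intro!: ext)
    then show "loss n L h C data (iota n L B) = loss_red n L h C data B"
      using lossR[of "iota n L B"] unfolding loss_red_def m_def[symmetric]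
      by (simp add: iota_def top_left_def m_def)
  qed
  have P2: "loss n L h C data T = loss_red n L h C data (q2 n L T)" if T: "T \<in> Param_int n L" for T
  proof -
    have "(\<lambda>i r c. if r < m i \<and> c < 1 + m (i-1) then T i r c else 0) = q2 n L T"
      by (simp add: q2_def top_left_def m_def)
    moreover have "T i r c = 0" if "1 \<le> i" "i \<le> L" "m i \<le> r" "c < 1 + m (i-1)" for i r c
      using T that unfolding Param_int_def in_block_def m_def by blast
    ultimately have "loss n L h C data T = loss m L h C data (q2 n L T)"
      using lossR[of T] by metis
    then show ?thesis by (simp add: loss_red_def m_def)
  qed
  have P3: "q1 n L (pgrad n L (loss n L h C data) T)
            = iota2 n L (pgrad m L (loss_red n L h C data) (q2 n L T))" if T: "T \<in> Param_int n L" for T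
  proof -
    have TP: "T \<in> Param n L" using T by (simp add: Param_int_def)
    have q2P: "q2 n L T \<in> Param m L"
      using TP unfolding Param_def q2_def top_left_def m_def by auto
    obtain G where G: "has_pgrad n L (loss n L h C data) T G"
      using assms(2) TP unfolding pdifferentiable_def by blast
    obtain G' where G': "has_pgrad m L (loss_red n L h C data) (q2 n L T) G'"
      using assms(3) q2P unfolding pdifferentiable_def m_def by blast
    have GP: "G \<in> Param n L" using G by (simp add: has_pgrad_def)
    have G'P: "G' \<in> Param m L" using G' by (simp add: has_pgrad_def)
    have Tpert: "(\<lambda>i' r' c'. T i' r' c' + delta i r c t i' r' c') \<in> Param_int n L"
      if "valid n L i r c" "\<not> in_block n L i r c" for i r c t
      using T that unfolding Param_int_def Param_def delta_def valid_def by auto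
    have "q1 n L G = iota2 n L G'"
    proof (intro ext)
      fix i r c
      show "q1 n L G i r c = iota2 n L G' i r c"
      proof (cases "valid n L i r c")
        case False
        have "G i r c = 0" using GP False Param_valid by blast
        moreover have "G' i r c = 0"
        proof (rule ccontr)
          assume "G' i r c \<noteq> 0"
          then have "valid m L i r c" using G'P Param_valid by blast
          then have "valid n L i r c" using mle[of i] mle[of "i - 1"] unfolding valid_def by auto
          then show False using False by simp
        qed
        ultimately show ?thesis by (simp add: q1_def iota2_def)
      next
        case V: True
        show ?thesis
        proof (cases "in_block n L i r c")
          case True
          then have "\<not> top_left n L i r c" by (simp add: in_block_def top_left_def)
          then show ?thesis using True by (simp add: q1_def iota2_def)
        next
          case nb: False
          show ?thesis
          proof (cases "top_left n L i r c")
            case tl: True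
            have Vm: "valid m L i r c" using V tl unfolding valid_def top_left_def m_def by auto
            have eq: "loss n L h C data (\<lambda>i' r' c'. T i' r' c' + delta i r c t i' r' c')
                = loss_red n L h C data (\<lambda>i' r' c'. q2 n L T i' r' c' + delta i r c t i' r' c')" for t
            proof -
              have "q2 n L (\<lambda>i' r' c'. T i' r' c' + delta i r c t i' r' c')
                  = (\<lambda>i' r' c'. q2 n L T i' r' c' + delta i r c t i' r' c')"
                using tl by (auto simp: q2_def delta_def intro!: ext)
              then show ?thesis using P2[OF Tpert[OF V nb]] by simp
            qed
            have "G i r c = G' i r c"
            proof -
              have c2: "\<forall>e>0. \<exists>d>0. \<forall>t. \<bar>t\<bar> < d \<longrightarrow>
                 \<bar>loss n L h C data (\<lambda>i' r' c'. T i' r' c' + delta i r c t i' r' c') - loss n L h C data T - G' i r c * t\<bar> \<le> e * \<bar>t\<bar>"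
                using coord[OF G' Vm] by (simp only: eq P2[OF T])
              show ?thesis using deriv_unique[OF coord[OF G V] c2] .
            qed
            then show ?thesis using nb tl by (simp add: q1_def iota2_def)
          next
            case ntl: False
            have eq: "loss n L h C data (\<lambda>i' r' c'. T i' r' c' + delta i r c t i' r' c')
                = loss n L h C data T" for t
            proof -
              have "q2 n L (\<lambda>i' r' c'. T i' r' c' + delta i r c t i' r' c') = q2 n L T"
                using ntl by (auto simp: q2_def delta_def intro!: ext)
              then show ?thesis using P2[OF Tpert[OF V nb]] P2[OF T] by simp
            qed
            have "G i r c = 0"
              using deriv_unique[OF coord[OF G V, unfolded eq] const_deriv] .
            then show ?thesis using nb ntl by (simp add: q1_def iota2_def)
          qed
        qed
      qed
    qed
    then show ?thesis using pgrad_eq[OF G] pgrad_eq[OF G'] by simp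
  qed
  show ?thesis using P1 P2 P3 unfolding iota1_def m_def by blast
qed

end
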